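(* Let $(X,\ast,u,d)$ be a finite GL-rack whose diagonal map $\Delta$ is a single cycle of length $|X|$. Then $(X,\ast,u,d)$ is a permutation GL-rack; specifically, $x\ast y=\Delta(x)$ for all $x,y\in X$ and $u\circ d=\Delta^{-1}$.
   Context: A rack is a set $X$ with a binary operation $\ast$ such that for every $y\in X$ the map $x\mapsto x\ast y$ is a bijection of $X$ and $(x\ast y)\ast z=(x\ast z)\ast(y\ast z)$ for all $x,y,z$. A GL-rack is a quadruple $(X,\ast,u,d)$ where $(X,\ast)$ is a rack and $u,d\colon X\to X$ are maps such that for all $x,y\in X$: $u(d(x\ast x))=d(u(x\ast x))=x$; $u(x\ast y)=u(x)\ast y$ and $d(x\ast y)=d(x)\ast y$; $x\ast u(y)=x\ast d(y)=x\ast y$. The diagonal map is $\Delta(x)=x\ast x$; for a finite GL-rack it is a bijection and $\Delta=(u\circ d)^{-1}$. A permutation GL-rack is a GL-rack $(X,\ast,u,d)$ with $X$ finite and $x\ast y=\sigma(x)$ for all $x,y$, for some permutation $\sigma$ of $X$, with $u\circ d=\sigma^{-1}$. *)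

theory Defs
  imports Main
begin

definition rack :: "'a set \<Rightarrow> ('a \<Rightarrow> 'a \<Rightarrow> 'a) \<Rightarrow> bool" where
  "rack X op \<longleftrightarrow>
     (\<forall>x\<in>X. \<forall>y\<in>X. op x y \<in> X) \<and>
     (\<forall>y\<in>X. bij_betw (\<lambda>x. op x y) X X) \<and>
     (\<forall>x\<in>X. \<forall>y\<in>X. \<forall>z\<in>X. op (op x y) z = op (op x z) (op y z))"

definition GL_rack :: "'a set \<Rightarrow> ('a \<Rightarrow> 'a \<Rightarrow> 'a) \<Rightarrow> ('a \<Rightarrow> 'a) \<Rightarrow> ('a \<Rightarrow> 'a) \<Rightarrow> bool" where
  "GL_rack X op u d \<longleftrightarrow>
     rack X op \<and>
     (\<forall>x\<in>X. u x \<in> X \<and> d x \<in> X) \<and>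
     (\<forall>x\<in>X. u (d (op x x)) = x \<and> d (u (op x x)) = x) \<and>
     (\<forall>x\<in>X. \<forall>y\<in>X. u (op x y) = op (u x) y \<and> d (op x y) = op (d x) y) \<and>
     (\<forall>x\<in>X. \<forall>y\<in>X. op x (u y) = op x y \<and> op x (d y) = op x y)"

definition diag :: "('a \<Rightarrow> 'a \<Rightarrow> 'a) \<Rightarrow> 'a \<Rightarrow> 'a" where
  "diag op x = op x x"

definition permutation_GL_rack :: "'a set \<Rightarrow> ('a \<Rightarrow> 'a \<Rightarrow> 'a) \<Rightarrow> ('a \<Rightarrow> 'a) \<Rightarrow> ('a \<Rightarrow> 'a) \<Rightarrow> bool" where
  "permutation_GL_rack X op u d \<longleftrightarrow>
     GL_rack X op u d \<and> finite X \<and>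
     (\<exists>\<sigma>. bij_betw \<sigma> X X \<and> (\<forall>x\<in>X. \<forall>y\<in>X. op x y = \<sigma> x) \<and>
          (\<forall>x\<in>X. u (d x) = inv_into X \<sigma> x))"

definition full_cycle_on :: "'a set \<Rightarrow> ('a \<Rightarrow> 'a) \<Rightarrow> bool" where
  "full_cycle_on X f \<longleftrightarrow> bij_betw f X X \<and>
     (\<exists>x\<in>X. X = {(f ^^ k) x | k. k < card X})"

end

theory Submission
  imports Defs
begin

theorem corollary3p4:
  fixes X :: "'a set" and op :: "'a \<Rightarrow> 'a \<Rightarrow> 'a" and u d :: "'a \<Rightarrow> 'a"
  assumes "finite X"
    and "GL_rack X op u d"
    and "full_cycle_on X (diag op)"
  shows "permutation_GL_rack X op u d
         \<and> (\<forall>x\<in>X. \<forall>y\<in>X. op x y = diag op x)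
         \<and> (\<forall>x\<in>X. u (d x) = inv_into X (diag op) x)"
proof -
  have cl: "\<And>x y. x \<in> X \<Longrightarrow> y \<in> X \<Longrightarrow> op x y \<in> X"
    and bj: "\<And>y. y \<in> X \<Longrightarrow> bij_betw (\<lambda>x. op x y) X X"
    and dist: "\<And>x y z. x \<in> X \<Longrightarrow> y \<in> X \<Longrightarrow> z \<in> X \<Longrightarrow> op (op x y) z = op (op x z) (op y z)"
    using assms(2) unfolding GL_rack_def rack_def by blast+
  have ud: "\<And>x. x \<in> X \<Longrightarrow> u (d (op x x)) = x"
    using assms(2) unfolding GL_rack_def by blast
  have bd: "bij_betw (diag op) X X" and ex: "\<exists>x\<in>X. X = {(diag op ^^ k) x | k. k < card X}"
    using assms(3) unfolding full_cycle_on_def by blast+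
  from ex obtain x0 where x0: "x0 \<in> X" and X: "X = {(diag op ^^ k) x0 | k. k < card X}" by (elim bexE)
  have key: "op z (diag op x) = op z x" if "x \<in> X" "z \<in> X" for x z
  proof -
    from bj[OF that(1)] that(2) obtain a where a: "a \<in> X" "op a x = z"
      unfolding bij_betw_def by force
    have "op (op a x) x = op (op a x) (op x x)" using dist[OF a(1) that(1) that(1)] .
    then show ?thesis using a by (simp add: diag_def)
  qed
  have it: "(diag op ^^ k) x0 \<in> X \<and> (\<forall>z\<in>X. op z ((diag op ^^ k) x0) = op z x0)" for k
  proof (induction k)
    case 0 then show ?case using x0 by simp
  next
    case (Suc k)
    then have a: "(diag op ^^ k) x0 \<in> X" and b: "\<forall>z\<in>X. op z ((diag op ^^ k) x0) = op z x0" by auto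
    have "(diag op ^^ Suc k) x0 \<in> X" using cl[OF a a] by (simp add: diag_def)
    moreover have "\<forall>z\<in>X. op z ((diag op ^^ Suc k) x0) = op z x0"
      using key[OF a] b by simp
    ultimately show ?case by blast
  qed
  have all: "\<forall>x\<in>X. \<forall>y\<in>X. op x y = diag op x"
  proof (intro ballI)
    fix x y assume xy: "x \<in> X" "y \<in> X"
    have "y \<in> {(diag op ^^ k) x0 | k. k < card X}" using xy(2) by (subst (asm) X)
    then obtain k where "y = (diag op ^^ k) x0" by blast
    then have "op x y = op x x0" using it xy(1) by auto
    moreover have "x \<in> {(diag op ^^ k) x0 | k. k < card X}" using xy(1) by (subst (asm) X)
    then obtain j where "x = (diag op ^^ j) x0" by blast
    then have "op x x = op x x0" using it xy(1) by auto
    ultimately show "op x y = diag op x" by (simp add: diag_def)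
  qed
  have udi: "\<forall>x\<in>X. u (d x) = inv_into X (diag op) x"
  proof
    fix x assume x: "x \<in> X"
    define w where "w = inv_into X (diag op) x"
    have xi: "x \<in> diag op ` X" using bd x unfolding bij_betw_def by simp
    have w: "w \<in> X" "diag op w = x" unfolding w_def
      using inv_into_into[OF xi] f_inv_into_f[OF xi] by auto
    show "u (d x) = inv_into X (diag op) x"
      using ud[OF w(1)] w unfolding w_def[symmetric] by (simp add: diag_def)
  qed
  have "permutation_GL_rack X op u d"
    unfolding permutation_GL_rack_def using assms(1,2) bd all udi by blast
  then show ?thesis using all udi by blast
qed

end
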